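(* Let $n\ge2$ and $P_{II*}=\{\downarrow\{\xi\}:\ \xi\in P_I,\ |\xi|=n-1\}$. For partitions $\xi,\upsilon\in P_I$ with $|\xi|=|\upsilon|=n-1$, one has $\mathcal C_{\{\downarrow\{\xi\}\}\text{-unc}}=\mathcal C_{\{\downarrow\{\upsilon\}\}\text{-unc}}$ (the classes labelled by the filters $\uparrow\{\downarrow\{\xi\}\}\cap P_{II*}=\{\downarrow\{\xi\}\}$ and $\{\downarrow\{\upsilon\}\}$) if and only if $\xi=\upsilon$.
   Context: Let $L=\{1,\dots,n\}$, and for $i\in L$ let $\mathcal H_i$ be a Hilbert space with $1<\dim\mathcal H_i<\infty$; $\mathcal H_X=\bigotimes_{i\in X}\mathcal H_i$ and $\mathcal D_X$ is the set of density operators on $\mathcal H_X$. $P_I$ is the set of partitions of $L$ ordered by refinement; $|\xi|$ is the number of parts of $\xi$, and $\downarrow\{\xi\}=\{\upsilon\in P_I:\upsilon\preceq\xi\}$. For $\xi\in P_I$, $\mathcal D_{\xi\text{-unc}}=\{\varrho\in\mathcal D_L:\varrho=\bigotimes_{X\in\xi}\varrho_X,\ \varrho_X\in\mathcal D_X\}$, and for $S\subseteq P_I$, $\mathcal D_{S\text{-unc}}=\bigcup_{\xi\in S}\mathcal D_{\xi\text{-unc}}$. $P_{II}$ is the set of nonempty down-sets of $P_I$, ordered by inclusion; $P_{III*}$ is the set of nonempty up-sets of $P_{II*}$. For $\Xi\in P_{III*}$: $\overline\Xi=P_{II*}\setminus\Xi$ and $\mathcal C_{\Xi\text{-unc}}=\bigcap_{\boldsymbol\xi'\in\overline\Xi}(\mathcal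 D_L\setminus\mathcal D_{\boldsymbol\xi'\text{-unc}})\cap\bigcap_{\boldsymbol\xi\in\Xi}\mathcal D_{\boldsymbol\xi\text{-unc}}$. *)

theory Defs
  imports Complex_Main "HOL-Library.FuncSet" "HOL-Library.Disjoint_Sets"
begin

text \<open>Concrete model: H_i = C^(d i); an orthonormal basis of H_X is indexed by
  the multi-indices in idx d X (extensional functions X -> {..<d i}).
  An operator on H_X is represented by its matrix kernel, zero outside idx d X.\<close>

type_synonym op = "(nat \<Rightarrow> nat) \<Rightarrow> (nat \<Rightarrow> nat) \<Rightarrow> complex"

definition Lset :: "nat \<Rightarrow> nat set" where
  "Lset n = {1..n}"

definition idx :: "(nat \<Rightarrow> nat) \<Rightarrow> nat set \<Rightarrow> (nat \<Rightarrow> nat) set" where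
  "idx d X = PiE X (\<lambda>i. {..<d i})"

definition density :: "(nat \<Rightarrow> nat) \<Rightarrow> nat set \<Rightarrow> op \<Rightarrow> bool" where
  "density d X \<rho> \<longleftrightarrow>
     (\<forall>f g. f \<notin> idx d X \<or> g \<notin> idx d X \<longrightarrow> \<rho> f g = 0) \<and>
     (\<forall>v :: (nat \<Rightarrow> nat) \<Rightarrow> complex.
        let q = (\<Sum>f\<in>idx d X. \<Sum>g\<in>idx d X. cnj (v f) * \<rho> f g * v g)
        in Im q = 0 \<and> Re q \<ge> 0) \<and>
     (\<Sum>f\<in>idx d X. \<rho> f f) = 1"

definition tensor_prod :: "(nat \<Rightarrow> nat) \<Rightarrow> nat set \<Rightarrow> nat set set \<Rightarrow> (nat set \<Rightarrow> op) \<Rightarrow> op" where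
  "tensor_prod d L \<xi> R = (\<lambda>f g. if f \<in> idx d L \<and> g \<in> idx d L
      then (\<Prod>X\<in>\<xi>. R X (restrict f X) (restrict g X)) else 0)"

definition refines :: "nat set set \<Rightarrow> nat set set \<Rightarrow> bool" where
  "refines \<upsilon> \<xi> \<longleftrightarrow> (\<forall>Y\<in>\<upsilon>. \<exists>X\<in>\<xi>. Y \<subseteq> X)"

definition PI :: "nat \<Rightarrow> nat set set set" where
  "PI n = {\<xi>. partition_on (Lset n) \<xi>}"

definition down :: "nat \<Rightarrow> nat set set \<Rightarrow> nat set set set" where
  "down n \<xi> = {\<upsilon> \<in> PI n. refines \<upsilon> \<xi>}"

definition D_unc :: "(nat \<Rightarrow> nat) \<Rightarrow> nat \<Rightarrow> nat set set \<Rightarrow> op set" where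
  "D_unc d n \<xi> = {\<rho>. density d (Lset n) \<rho> \<and>
      (\<exists>R. (\<forall>X\<in>\<xi>. density d X (R X)) \<and> \<rho> = tensor_prod d (Lset n) \<xi> R)}"

definition D_S_unc :: "(nat \<Rightarrow> nat) \<Rightarrow> nat \<Rightarrow> nat set set set \<Rightarrow> op set" where
  "D_S_unc d n S = (\<Union>\<xi>\<in>S. D_unc d n \<xi>)"

definition PII_star :: "nat \<Rightarrow> nat set set set set" where
  "PII_star n = {down n \<xi> | \<xi>. \<xi> \<in> PI n \<and> card \<xi> = n - 1}"

definition C_unc :: "(nat \<Rightarrow> nat) \<Rightarrow> nat \<Rightarrow> nat set set set set \<Rightarrow> op set" where
  "C_unc d n \<Xi> = {\<rho>. density d (Lset n) \<rho> \<and>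
      (\<forall>S'\<in>PII_star n - \<Xi>. \<rho> \<notin> D_S_unc d n S') \<and>
      (\<forall>S\<in>\<Xi>. \<rho> \<in> D_S_unc d n S)}"

end

theory Submission
  imports Defs
begin


lemma sum_nat_eq_1:
  fixes f :: "'a \<Rightarrow> nat"
  assumes "finite S" "sum f S = 1"
  shows "\<exists>x\<in>S. f x = 1 \<and> (\<forall>y\<in>S. y \<noteq> x \<longrightarrow> f y = 0)"
proof -
  obtain x where x: "x \<in> S" "f x \<noteq> 0" using assms by (metis sum.neutral zero_neq_one)
  have "sum f S = f x + sum f (S - {x})" using assms x by (simp add: sum.remove)
  then have 1: "f x = 1" "sum f (S - {x}) = 0" using x(2) assms(2) by linarith+
  have "\<forall>y\<in>S. y \<noteq> x \<longrightarrow> f y = 0"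
    using 1(2) assms(1) by (simp add: sum_eq_0_iff)
  then show ?thesis using x 1 by auto
qed

lemma pair_block:
  assumes P: "partition_on L \<pi>" and fin: "finite L" and c: "card \<pi> = card L - 1" and c2: "card L \<ge> 2"
  shows "\<exists>a b. a \<noteq> b \<and> {a,b} \<in> \<pi> \<and> (\<forall>X\<in>\<pi>. X \<noteq> {a,b} \<longrightarrow> card X = 1)"
proof -
  have U: "\<Union>\<pi> = L" using partition_onD1[OF P] by simp
  have finpi: "finite \<pi>" using fin U finite_UnionD by blast
  have finX: "\<And>X. X \<in> \<pi> \<Longrightarrow> finite X" using U fin by (meson Sup_upper finite_subset)
  have ne: "\<And>X. X \<in> \<pi> \<Longrightarrow> card X \<ge> 1"
    using partition_onD3[OF P] finX by (metis One_nat_def Suc_leI card_gt_0_iff)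
  have "card L = sum card \<pi>"
    using card_Union_disjoint[of \<pi>] partition_onD2[OF P] finX U by (simp add: disjoint_def pairwise_def disjnt_def)
  moreover have "sum card \<pi> = sum (\<lambda>X. card X - 1) \<pi> + card \<pi>"
  proof -
    have "sum card \<pi> = sum (\<lambda>X. (card X - 1) + 1) \<pi>" using ne by (intro sum.cong) (auto simp: Suc_le_eq)
    also have "\<dots> = sum (\<lambda>X. card X - 1) \<pi> + card \<pi>" by (subst sum.distrib) simp
    finally show ?thesis .
  qed
  ultimately have "sum (\<lambda>X. card X - 1) \<pi> = 1" using c c2 by linarith
  then obtain X0 where X0: "X0 \<in> \<pi>" "card X0 - 1 = 1" "\<forall>Y\<in>\<pi>. Y \<noteq> X0 \<longrightarrow> card Y - 1 = 0"
    using sum_nat_eq_1[OF finpi] by blast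
  then have "card X0 = 2" by simp
  then obtain a b where "X0 = {a,b}" "a \<noteq> b" by (meson card_2_iff)
  then show ?thesis using X0 ne by (metis diff_is_0_eq le_antisym)
qed

lemma pair_sub:
  assumes P1: "partition_on L \<xi>" and P2: "partition_on L \<zeta>"
    and a: "{a,b} \<in> \<xi>" "\<forall>X\<in>\<xi>. X \<noteq> {a,b} \<longrightarrow> card X = 1"
    and b: "{a,b} \<in> \<zeta>" "\<forall>X\<in>\<zeta>. X \<noteq> {a,b} \<longrightarrow> card X = 1"
  shows "\<xi> \<subseteq> \<zeta>"
proof
  fix X assume X: "X \<in> \<xi>"
  show "X \<in> \<zeta>"
  proof (cases "X = {a,b}")
    case True then show ?thesis using b by simp
  next
    case False
    then obtain i where i: "X = {i}" using a X by (meson card_1_singletonE)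
    have "X \<inter> {a,b} = {}" using disjointD[OF partition_onD2[OF P1] X a(1) False] .
    then have iab: "i \<notin> {a,b}" using i by auto
    have "i \<in> L" using X i partition_onD1[OF P1] by auto
    then obtain Z where Z: "Z \<in> \<zeta>" "i \<in> Z" using partition_onD1[OF P2] by auto
    then have "Z \<noteq> {a,b}" using iab by auto
    then have "card Z = 1" using b Z by auto
    then have "Z = {i}" using Z by (metis card_1_singletonE singletonD)
    then show ?thesis using Z i by simp
  qed
qed

lemma sep:
  assumes fin: "finite L" and P1: "partition_on L \<xi>" and P2: "partition_on L \<zeta>"
    and a: "a \<noteq> b" "{a,b} \<in> \<xi>" "\<forall>X\<in>\<xi>. X \<noteq> {a,b} \<longrightarrow> card X = 1"
    and b: "c \<noteq> e" "{c,e} \<in> \<zeta>" "\<forall>X\<in>\<zeta>. X \<noteq> {c,e} \<longrightarrow> card X = 1"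
    and ne: "\<zeta> \<noteq> \<xi>" and B: "B \<in> \<zeta>" "a \<in> B" "b \<in> B"
  shows False
proof -
  have finB: "finite B" using B P2 fin partition_onD1 by (metis Union_upper finite_subset)
  have cB: "card B \<ge> 2" using B a(1) finB
    by (metis card_2_iff card_mono empty_subsetI insert_subset)
  then have "B = {c,e}" using b B by fastforce
  then have "card B = 2" using b by simp
  then have Bab: "B = {a,b}" using B a(1) finB
    by (metis card_2_iff doubleton_eq_iff insertE singletonD)
  have "\<xi> \<subseteq> \<zeta>" using pair_sub[OF P1 P2 a(2,3)] B Bab b \<open>B = {c,e}\<close> by auto
  moreover have "\<zeta> \<subseteq> \<xi>" using pair_sub[OF P2 P1 _ _ a(2,3)] B Bab b \<open>B = {c,e}\<close> by auto
  ultimately show False using ne by auto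
qed



lemma finite_idx: "finite X \<Longrightarrow> finite (idx d X)"
  unfolding idx_def by (simp add: finite_PiE)

lemma density_diag:
  assumes fin: "finite X"
    and rho: "\<And>f g. \<rho> f g = (if f = g \<and> f \<in> idx d X then complex_of_real (w f) else 0)"
    and pos: "\<And>f. w f \<ge> 0" and tr: "(\<Sum>f\<in>idx d X. w f) = 1"
  shows "density d X \<rho>"
proof -
  let ?I = "idx d X"
  have fI: "finite ?I" using finite_idx[OF fin] .
  have q: "(\<Sum>f\<in>?I. \<Sum>g\<in>?I. cnj (v f) * \<rho> f g * v g) = of_real (\<Sum>f\<in>?I. w f * (cmod (v f))^2)" for v
  proof -
    have "(\<Sum>f\<in>?I. \<Sum>g\<in>?I. cnj (v f) * \<rho> f g * v g) = (\<Sum>f\<in>?I. cnj (v f) * of_real (w f) * v f)"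
    proof (rule sum.cong[OF refl])
      fix f assume f: "f \<in> ?I"
      have "(\<Sum>g\<in>?I. cnj (v f) * \<rho> f g * v g) = (\<Sum>g\<in>?I. if f = g then cnj (v f) * of_real (w f) * v f else 0)"
        using f by (intro sum.cong) (auto simp: rho)
      also have "\<dots> = cnj (v f) * of_real (w f) * v f" using f fI by (simp add: sum.delta)
      finally show "(\<Sum>g\<in>?I. cnj (v f) * \<rho> f g * v g) = cnj (v f) * of_real (w f) * v f" .
    qed
    also have "\<dots> = (\<Sum>f\<in>?I. of_real (w f * (cmod (v f))^2))"
    proof (rule sum.cong[OF refl])
      fix f
      have "cnj (v f) * v f = of_real ((cmod (v f))^2)"
        by (simp add: complex_norm_square mult.commute del: of_real_power)
      then show "cnj (v f) * of_real (w f) * v f = of_real (w f * (cmod (v f))^2)"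
        by (metis mult.commute mult.left_commute of_real_mult)
    qed
    also have "\<dots> = of_real (\<Sum>f\<in>?I. w f * (cmod (v f))^2)" by simp
    finally show ?thesis .
  qed
  have "(\<Sum>f\<in>?I. \<rho> f f) = (\<Sum>f\<in>?I. of_real (w f))" by (simp add: rho)
  also have "\<dots> = 1" using tr by (metis of_real_1 of_real_sum)
  finally have "(\<Sum>f\<in>?I. \<rho> f f) = 1" .
  moreover have "\<forall>f g. f \<notin> ?I \<or> g \<notin> ?I \<longrightarrow> \<rho> f g = 0" by (auto simp: rho)
  moreover have "0 \<le> (\<Sum>f\<in>?I. w f * (cmod (v f))^2)" for v using pos by (intro sum_nonneg) simp
  ultimately show ?thesis unfolding density_def Let_def using q by simp
qed

definition ee :: "nat set \<Rightarrow> nat \<Rightarrow> nat \<Rightarrow> nat \<Rightarrow> nat \<Rightarrow> (nat \<Rightarrow> nat)" where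
  "ee L a b s t = (\<lambda>i. if i \<in> L then (if i = a then s else if i = b then t else 0) else undefined)"

lemma ee_idx: "s \<le> 1 \<Longrightarrow> t \<le> 1 \<Longrightarrow> \<forall>i\<in>L. 1 < d i \<Longrightarrow> ee L a b s t \<in> idx d L"
  unfolding ee_def idx_def by (auto simp: PiE_def extensional_def; fastforce)

lemma ee_restrict:
  assumes "a \<in> Z \<longrightarrow> s = s'" "b \<in> Z \<longrightarrow> t = t'"
  shows "restrict (ee L a b s t) Z = restrict (ee L a b s' t') Z"
  using assms unfolding ee_def restrict_def by (auto simp: fun_eq_iff)

lemma ee_inj:
  assumes "a \<in> L" "b \<in> L" "a \<noteq> b" "ee L a b s t = ee L a b s' t'"
  shows "s = s' \<and> t = t'"
  using assms fun_cong[OF assms(4), of a] fun_cong[OF assms(4), of b] unfolding ee_def by auto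

definition w0 :: "nat set \<Rightarrow> nat \<Rightarrow> nat \<Rightarrow> (nat \<Rightarrow> nat) \<Rightarrow> real" where
  "w0 L a b f = (if f = ee L a b 0 0 then 1/2 else 0) + (if f = ee L a b 1 1 then 1/2 else 0)"

definition rho0 :: "(nat \<Rightarrow> nat) \<Rightarrow> nat set \<Rightarrow> nat \<Rightarrow> nat \<Rightarrow> op" where
  "rho0 d L a b f g = (if f = g \<and> f \<in> idx d L then complex_of_real (w0 L a b f) else 0)"

lemma rho0_density:
  assumes "finite L" "a \<in> L" "b \<in> L" "a \<noteq> b" "\<forall>i\<in>L. 1 < d i"
  shows "density d L (rho0 d L a b)"
proof (rule density_diag[OF assms(1), where w = "w0 L a b"])
  show "rho0 d L a b f g = (if f = g \<and> f \<in> idx d L then complex_of_real (w0 L a b f) else 0)" for f g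
    by (simp add: rho0_def)
  show "0 \<le> w0 L a b f" for f by (simp add: w0_def)
  have ne: "ee L a b 0 0 \<noteq> ee L a b 1 1" using ee_inj[OF assms(2-4)] by auto
  have fI: "finite (idx d L)" using finite_idx[OF assms(1)] .
  show "(\<Sum>f\<in>idx d L. w0 L a b f) = 1"
    unfolding w0_def using ee_idx[OF _ _ assms(5)] fI ne
    by (simp add: sum.distrib sum.delta')
qed



lemma restrict_idx: "f \<in> idx d L \<Longrightarrow> X \<subseteq> L \<Longrightarrow> restrict f X \<in> idx d X"
  unfolding idx_def by (auto simp: restrict_PiE_iff dest: PiE_mem)

lemma restrict_eq_all:
  assumes "f \<in> extensional L" "h \<in> extensional L" "\<Union>\<xi> = L" "\<forall>X\<in>\<xi>. restrict f X = restrict h X"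
  shows "f = h"
proof (rule ext)
  fix i show "f i = h i"
  proof (cases "i \<in> L")
    case True
    then have "i \<in> \<Union>\<xi>" using assms(3) by simp
    then obtain X where X: "X \<in> \<xi>" "i \<in> X" by (rule UnionE)
    have "restrict f X = restrict h X" using assms(4) X(1) by (rule bspec)
    then have "restrict f X i = restrict h X i" by (rule fun_cong)
    then show ?thesis using X(2) by simp
  next
    case False then show ?thesis using extensional_arb[OF assms(1) False] extensional_arb[OF assms(2) False] by simp
  qed
qed

lemma ee_ext: "ee L a b s t \<in> extensional L"
  unfolding ee_def extensional_def by simp

definition WX :: "nat set \<Rightarrow> nat \<Rightarrow> nat \<Rightarrow> nat set \<Rightarrow> (nat \<Rightarrow> nat) \<Rightarrow> real" where
  "WX L a b X h = (if a \<in> X then (if h = restrict (ee L a b 0 0) X then 1/2 else 0)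
      + (if h = restrict (ee L a b 1 1) X then 1/2 else 0)
     else (if h = restrict (ee L a b 0 0) X then 1 else 0))"

definition RR :: "(nat \<Rightarrow> nat) \<Rightarrow> nat set \<Rightarrow> nat \<Rightarrow> nat \<Rightarrow> nat set \<Rightarrow> op" where
  "RR d L a b X f g = (if f = g \<and> f \<in> idx d X then complex_of_real (WX L a b X f) else 0)"

lemma K1:
  assumes fin: "finite L" and P: "partition_on L \<xi>" and PX: "Pb \<in> \<xi>" "a \<in> Pb" "b \<in> Pb" and ab: "a \<noteq> b"
    and d: "\<forall>i\<in>L. 1 < d i"
  shows "rho0 d L a b = tensor_prod d L \<xi> (RR d L a b)"
    and "\<forall>X\<in>\<xi>. density d X (RR d L a b X)"
proof -
  have U: "\<Union>\<xi> = L" using partition_onD1[OF P] by simp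
  have finxi: "finite \<xi>" using fin U finite_UnionD by blast
  have sub: "\<And>X. X \<in> \<xi> \<Longrightarrow> X \<subseteq> L" using U by auto
  have finX: "\<And>X. X \<in> \<xi> \<Longrightarrow> finite X" using sub fin finite_subset by blast
  have aL: "a \<in> L" "b \<in> L" using PX sub by auto
  let ?e0 = "ee L a b 0 0" and ?e1 = "ee L a b 1 1"
  have e0I: "?e0 \<in> idx d L" and e1I: "?e1 \<in> idx d L" using ee_idx[OF _ _ d] by auto
  have dis: "\<And>X. X \<in> \<xi> \<Longrightarrow> X \<noteq> Pb \<Longrightarrow> a \<notin> X \<and> b \<notin> X"
    using disjointD[OF partition_onD2[OF P]] PX by blast
  have rne: "\<And>X. a \<in> X \<Longrightarrow> restrict ?e0 X \<noteq> restrict ?e1 X"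
  proof
    fix X assume aX: "a \<in> X" and eq: "restrict ?e0 X = restrict ?e1 X"
    show False using fun_cong[OF eq, of a] aX aL by (simp add: ee_def)
  qed
  show "\<forall>X\<in>\<xi>. density d X (RR d L a b X)"
  proof
    fix X assume X: "X \<in> \<xi>"
    have r0: "restrict ?e0 X \<in> idx d X" "restrict ?e1 X \<in> idx d X"
      using restrict_idx[OF e0I sub[OF X]] restrict_idx[OF e1I sub[OF X]] .
    show "density d X (RR d L a b X)"
    proof (rule density_diag[OF finX[OF X], where w = "WX L a b X"])
      show "RR d L a b X f g = (if f = g \<and> f \<in> idx d X then complex_of_real (WX L a b X f) else 0)" for f g
        by (simp add: RR_def)
      show "0 \<le> WX L a b X f" for f by (simp add: WX_def)
      show "(\<Sum>f\<in>idx d X. WX L a b X f) = 1"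
      proof (cases "a \<in> X")
        case True
        then show ?thesis unfolding WX_def using r0 finite_idx[OF finX[OF X]] rne[OF True]
          by (simp add: sum.distrib sum.delta')
      next
        case False
        then show ?thesis unfolding WX_def using r0 finite_idx[OF finX[OF X]]
          by (simp add: sum.delta')
      qed
    qed
  qed
  have prodW: "(\<Prod>X\<in>\<xi>. WX L a b X (restrict f X)) = w0 L a b f" if f: "f \<in> idx d L" for f
  proof -
    have split: "(\<Prod>X\<in>\<xi>. WX L a b X (restrict f X)) =
        WX L a b Pb (restrict f Pb) * (\<Prod>X\<in>\<xi>-{Pb}. (if restrict f X = restrict ?e0 X then 1 else 0))"
    proof -
      have "(\<Prod>X\<in>\<xi>. WX L a b X (restrict f X)) = WX L a b Pb (restrict f Pb) * (\<Prod>X\<in>\<xi>-{Pb}. WX L a b X (restrict f X))"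
        using finxi PX(1) by (rule prod.remove)
      moreover have "(\<Prod>X\<in>\<xi>-{Pb}. WX L a b X (restrict f X)) = (\<Prod>X\<in>\<xi>-{Pb}. (if restrict f X = restrict ?e0 X then 1 else 0))"
        using dis by (intro prod.cong) (auto simp: WX_def)
      ultimately show ?thesis by simp
    qed
    have e01: "\<And>X. X \<in> \<xi>-{Pb} \<Longrightarrow> restrict ?e1 X = restrict ?e0 X"
      using dis by (intro ee_restrict) auto
    have ne: "?e0 \<noteq> ?e1" using rne[OF PX(2)] by auto
    show ?thesis
    proof (cases "f = ?e0")
      case True
      then show ?thesis using split rne[OF PX(2)] PX ne by (simp add: WX_def w0_def)
    next
      case F0: False
      show ?thesis
      proof (cases "f = ?e1")
        case True
        have "(\<Prod>X\<in>\<xi>-{Pb}. (if restrict f X = restrict ?e0 X then 1 else 0)) = (1::real)"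
          using True e01 by (intro prod.neutral) auto
        then show ?thesis using split rne[OF PX(2)] PX ne True by (simp add: WX_def w0_def)
      next
        case F1: False
        have w: "w0 L a b f = 0" using F0 F1 by (simp add: w0_def)
        show ?thesis
        proof (cases "\<exists>X\<in>\<xi>-{Pb}. restrict f X \<noteq> restrict ?e0 X")
          case True
          then have "(\<Prod>X\<in>\<xi>-{Pb}. (if restrict f X = restrict ?e0 X then 1 else 0)) = (0::real)"
            using finxi by (intro prod_zero) auto
          then show ?thesis using split w by simp
        next
          case False
          have fe: "f \<in> extensional L" using f by (simp add: idx_def PiE_def)
          have "restrict f Pb \<noteq> restrict ?e0 Pb"
          proof
            assume "restrict f Pb = restrict ?e0 Pb"
            then have "\<forall>X\<in>\<xi>. restrict f X = restrict ?e0 X" using False by auto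
            then show False using restrict_eq_all[OF fe ee_ext U] F0 by blast
          qed
          moreover have "restrict f Pb \<noteq> restrict ?e1 Pb"
          proof
            assume "restrict f Pb = restrict ?e1 Pb"
            then have "\<forall>X\<in>\<xi>. restrict f X = restrict ?e1 X" using False e01 by (metis Diff_iff singletonD)
            then show False using restrict_eq_all[OF fe ee_ext U] F1 by blast
          qed
          ultimately show ?thesis using split w PX by (simp add: WX_def)
        qed
      qed
    qed
  qed
  show "rho0 d L a b = tensor_prod d L \<xi> (RR d L a b)"
  proof (intro ext)
    fix f g
    show "rho0 d L a b f g = tensor_prod d L \<xi> (RR d L a b) f g"
    proof (cases "f \<in> idx d L \<and> g \<in> idx d L")
      case False then show ?thesis by (auto simp: rho0_def tensor_prod_def)
    next
      case True
      show ?thesis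
      proof (cases "f = g")
        case fg: True
        have "(\<Prod>X\<in>\<xi>. RR d L a b X (restrict f X) (restrict f X)) = (\<Prod>X\<in>\<xi>. complex_of_real (WX L a b X (restrict f X)))"
          using True restrict_idx sub by (intro prod.cong) (auto simp: RR_def)
        also have "\<dots> = complex_of_real (\<Prod>X\<in>\<xi>. WX L a b X (restrict f X))" by simp
        also have "\<dots> = complex_of_real (w0 L a b f)" using prodW True by simp
        finally show ?thesis using True fg by (simp add: rho0_def tensor_prod_def)
      next
        case False
        have fe: "f \<in> extensional L" "g \<in> extensional L" using True by (auto simp: idx_def PiE_def)
        then obtain X where X: "X \<in> \<xi>" "restrict f X \<noteq> restrict g X"
          using restrict_eq_all[OF fe U] False by blast
        then have "(\<Prod>X\<in>\<xi>. RR d L a b X (restrict f X) (restrict g X)) = 0"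
          using finxi by (intro prod_zero) (auto simp: RR_def)
        then show ?thesis using True False by (simp add: rho0_def tensor_prod_def)
      qed
    qed
  qed
qed



lemma K3:
  assumes fin: "finite (Lset n)" and P: "partition_on (Lset n) u" and XY: "X \<in> u" "Y \<in> u" "X \<noteq> Y"
    and ab: "a \<in> X" "b \<in> Y" and d: "\<forall>i\<in>Lset n. 1 < d i"
  shows "rho0 d (Lset n) a b \<notin> D_unc d n u"
proof
  let ?L = "Lset n"
  assume "rho0 d ?L a b \<in> D_unc d n u"
  then obtain R where R: "rho0 d ?L a b = tensor_prod d ?L u R" unfolding D_unc_def by blast
  have U: "\<Union>u = ?L" using partition_onD1[OF P] by simp
  have "finite (\<Union>u)" using fin U by simp
  then have finu: "finite u" by (rule finite_UnionD)
  have "a \<in> \<Union>u" "b \<in> \<Union>u" using XY ab by blast+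
  then have aL: "a \<in> ?L" "b \<in> ?L" using U by simp_all
  have "X \<inter> Y = {}" using disjointD[OF partition_onD2[OF P] XY] .
  then have abne: "a \<noteq> b" using ab by blast
  have dis: "\<And>Z. Z \<in> u \<Longrightarrow> Z \<noteq> X \<Longrightarrow> a \<notin> Z" "\<And>Z. Z \<in> u \<Longrightarrow> Z \<noteq> Y \<Longrightarrow> b \<notin> Z"
    using disjointD[OF partition_onD2[OF P]] XY ab by blast+
  define G where "G = (\<lambda>e Z. R Z (restrict e Z) (restrict e Z))"
  define C where "C = (\<Prod>Z\<in>u-{X}-{Y}. G (ee ?L a b 0 0) Z)"
  have main: "rho0 d ?L a b (ee ?L a b s t) (ee ?L a b s t) = G (ee ?L a b s 0) X * G (ee ?L a b 0 t) Y * C"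
    if st: "s \<le> 1" "t \<le> 1" for s t
  proof -
    let ?e = "ee ?L a b s t"
    have eI: "?e \<in> idx d ?L" using ee_idx[OF st d] .
    have "rho0 d ?L a b ?e ?e = (\<Prod>Z\<in>u. G ?e Z)" using R eI by (simp add: tensor_prod_def G_def)
    also have "\<dots> = G ?e X * (\<Prod>Z\<in>u-{X}. G ?e Z)" using finu XY(1) by (rule prod.remove)
    also have "(\<Prod>Z\<in>u-{X}. G ?e Z) = G ?e Y * (\<Prod>Z\<in>u-{X}-{Y}. G ?e Z)"
      using finu XY by (intro prod.remove) auto
    also have "(\<Prod>Z\<in>u-{X}-{Y}. G ?e Z) = C" unfolding C_def
    proof (rule prod.cong[OF refl])
      fix Z assume Z: "Z \<in> u-{X}-{Y}"
      then have "a \<notin> Z" "b \<notin> Z" using dis by auto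
      then have "restrict ?e Z = restrict (ee ?L a b 0 0) Z" by (intro ee_restrict) auto
      then show "G ?e Z = G (ee ?L a b 0 0) Z" unfolding G_def by simp
    qed
    also have "G ?e X = G (ee ?L a b s 0) X" unfolding G_def
      using dis(2)[OF XY(1)] XY(3) ee_restrict[of a X s s b t 0 ?L] by simp
    also have "G ?e Y = G (ee ?L a b 0 t) Y" unfolding G_def
      using dis(1)[OF XY(2)] XY(3) ee_restrict[of a Y s 0 b t t ?L] by simp
    finally show ?thesis by (simp add: mult.assoc)
  qed
  have inj: "ee ?L a b s t = ee ?L a b s' t' \<Longrightarrow> s = s' \<and> t = t'" for s t s' t'
    using ee_inj[OF aL abne] by blast
  have val: "rho0 d ?L a b (ee ?L a b s t) (ee ?L a b s t) = complex_of_real (w0 ?L a b (ee ?L a b s t))"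
    if "s \<le> 1" "t \<le> 1" for s t using ee_idx[OF that d] by (simp add: rho0_def)
  have v10: "w0 ?L a b (ee ?L a b 1 0) = 0" and v01: "w0 ?L a b (ee ?L a b 0 1) = 0"
    and v00: "w0 ?L a b (ee ?L a b 0 0) = 1/2" and v11: "w0 ?L a b (ee ?L a b 1 1) = 1/2"
  proof -
    have n: "ee ?L a b 1 0 \<noteq> ee ?L a b 0 0" "ee ?L a b 1 0 \<noteq> ee ?L a b 1 1"
      "ee ?L a b 0 1 \<noteq> ee ?L a b 0 0" "ee ?L a b 0 1 \<noteq> ee ?L a b 1 1"
      "ee ?L a b 0 0 \<noteq> ee ?L a b 1 1"
      using inj[of 1 0 0 0] inj[of 1 0 1 1] inj[of 0 1 0 0] inj[of 0 1 1 1] inj[of 0 0 1 1] by auto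
    show "w0 ?L a b (ee ?L a b 1 0) = 0" "w0 ?L a b (ee ?L a b 0 1) = 0"
      "w0 ?L a b (ee ?L a b 0 0) = 1/2" "w0 ?L a b (ee ?L a b 1 1) = 1/2"
      unfolding w0_def using n by simp_all
  qed
  have "rho0 d ?L a b (ee ?L a b 1 0) (ee ?L a b 1 0) * rho0 d ?L a b (ee ?L a b 0 1) (ee ?L a b 0 1)
      = rho0 d ?L a b (ee ?L a b 0 0) (ee ?L a b 0 0) * rho0 d ?L a b (ee ?L a b 1 1) (ee ?L a b 1 1)"
    using main[of 1 0] main[of 0 1] main[of 0 0] main[of 1 1] by (simp add: algebra_simps)
  then show False using val[of 1 0] val[of 0 1] val[of 0 0] val[of 1 1] v10 v01 v00 v11 by simp
qed



theorem proposition8: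
  fixes n :: nat and d :: "nat \<Rightarrow> nat" and \<xi> \<upsilon> :: "nat set set"
  assumes "n \<ge> 2"
    and "\<forall>i\<in>Lset n. 1 < d i"
    and "\<xi> \<in> PI n" and "card \<xi> = n - 1"
    and "\<upsilon> \<in> PI n" and "card \<upsilon> = n - 1"
  shows "C_unc d n {down n \<xi>} = C_unc d n {down n \<upsilon>} \<longleftrightarrow> \<xi> = \<upsilon>"
proof
  assume eq: "C_unc d n {down n \<xi>} = C_unc d n {down n \<upsilon>}"
  show "\<xi> = \<upsilon>"
  proof (rule ccontr)
    assume ne: "\<xi> \<noteq> \<upsilon>"
    let ?L = "Lset n"
    have fin: "finite ?L" and cL: "card ?L = n" by (simp_all add: Lset_def)
    have Pxi: "partition_on ?L \<xi>" using assms(3) by (simp add: PI_def)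
    obtain a b where ab: "a \<noteq> b" "{a,b} \<in> \<xi>" "\<forall>X\<in>\<xi>. X \<noteq> {a,b} \<longrightarrow> card X = 1"
      using pair_block[OF Pxi fin] assms(1,4) cL by auto
    have aL: "a \<in> ?L" "b \<in> ?L" using ab(2) partition_onD1[OF Pxi] by auto
    let ?r = "rho0 d ?L a b"
    have notin: "?r \<notin> D_S_unc d n (down n \<zeta>)" if z: "\<zeta> \<in> PI n" "card \<zeta> = n - 1" "\<zeta> \<noteq> \<xi>" for \<zeta>
    proof
      assume "?r \<in> D_S_unc d n (down n \<zeta>)"
      then obtain u where u: "u \<in> down n \<zeta>" "?r \<in> D_unc d n u" unfolding D_S_unc_def by blast
      have Pu: "partition_on ?L u" and ref: "refines u \<zeta>" using u(1) by (auto simp: down_def PI_def)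
      have Pz: "partition_on ?L \<zeta>" using z(1) by (simp add: PI_def)
      obtain c e where ce: "c \<noteq> e" "{c,e} \<in> \<zeta>" "\<forall>X\<in>\<zeta>. X \<noteq> {c,e} \<longrightarrow> card X = 1"
        using pair_block[OF Pz fin] assms(1) z(2) cL by auto
      have "a \<in> \<Union>u" "b \<in> \<Union>u" using aL partition_onD1[OF Pu] by auto
      then obtain X Y where XY: "X \<in> u" "a \<in> X" "Y \<in> u" "b \<in> Y" by blast
      have "X \<noteq> Y"
      proof
        assume "X = Y"
        obtain B where B: "B \<in> \<zeta>" "X \<subseteq> B" using ref XY(1) by (auto simp: refines_def)
        show False using sep[OF fin Pxi Pz ab ce z(3) B(1)] B(2) XY \<open>X = Y\<close> by auto
      qed
      then show False using K3[OF fin Pu XY(1) XY(3) _ XY(2) XY(4) assms(2)] u(2) by blast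
    qed
    have "?r \<in> C_unc d n {down n \<xi>}"
      unfolding C_unc_def
    proof (intro CollectI conjI ballI)
      show dens: "density d ?L ?r" using rho0_density[OF fin aL ab(1) assms(2)] .
      fix S' assume "S' \<in> PII_star n - {down n \<xi>}"
      then obtain \<zeta> where "S' = down n \<zeta>" "\<zeta> \<in> PI n" "card \<zeta> = n - 1" "\<zeta> \<noteq> \<xi>"
        unfolding PII_star_def by auto
      then show "?r \<notin> D_S_unc d n S'" using notin by simp
    next
      fix S assume "S \<in> {down n \<xi>}"
      then have S: "S = down n \<xi>" by simp
      have "\<xi> \<in> down n \<xi>" using assms(3) by (auto simp: down_def refines_def)
      moreover have "?r \<in> D_unc d n \<xi>"
        unfolding D_unc_def
        using K1[OF fin Pxi ab(2) _ _ ab(1) assms(2)] rho0_density[OF fin aL ab(1) assms(2)] by auto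
      ultimately show "?r \<in> D_S_unc d n S" unfolding S D_S_unc_def by blast
    qed
    then have "?r \<in> C_unc d n {down n \<upsilon>}" using eq by simp
    then have "?r \<in> D_S_unc d n (down n \<upsilon>)" unfolding C_unc_def by simp
    then show False using notin[OF assms(5,6)] ne by metis
  qed
qed simp


end
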